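(* Let $\alpha\in[0,2)$ and $m\in\mathbb{N}$, and let $f_{2m+1+\alpha}(t)=\mathrm{sgn}(t)|t|^{2m+1+\alpha}$ on $[-1,1]$. Then \[ P_{\mathcal{A}_+}(f_{2m+1+\alpha})=c_mt^{2m+1}+d_mt^{2m+3}, \] where \[ c_m=\frac{(4m+3)(4m+5)}{(4m+3+\alpha)(4m+5+\alpha)}\cdot\frac{2-\alpha}{2},\qquad d_m=\frac{(4m+5)(4m+7)}{(4m+3+\alpha)(4m+5+\alpha)}\cdot\frac{\alpha}{2}. \] Moreover, \[ d(f_{2m+1+\alpha},\mathcal{A}_+)=\frac{\sqrt2\,\alpha(2-\alpha)}{(4m+\alpha+3)(4m+\alpha+5)\sqrt{4m+2\alpha+3}},\qquad \lambda(f_{2m+1+\alpha},\mathcal{A}_+)=\frac{\alpha(2-\alpha)}{(4m+\alpha+3)(4m+\alpha+5)}. \]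
   Context: $\mathbb{N}=\{0,1,2,\dots\}$. $\mathcal{A}_+=\{\sum_{n=0}^\infty a_nt^n : a_n\ge0,\ \text{the series converges in }L^2([-1,1])\}$ (real $L^2$ for Lebesgue measure, convergence of partial sums); it is a closed convex cone and $P_{\mathcal{A}_+}$ denotes the metric projection onto it (the unique nearest point). $d(w,\mathcal{A}_+)=\inf\{\|w-u\|:u\in\mathcal{A}_+\}$ and, for $w\ne0$, $\lambda(w,\mathcal{A}_+)=d(w,\mathcal{A}_+)/\|w\|$, norms in $L^2([-1,1])$. *)

theory Defs
  imports "HOL-Analysis.Analysis"
begin

definition L2I :: "(real \<Rightarrow> real) \<Rightarrow> bool" where
  "L2I f \<longleftrightarrow> set_borel_measurable lborel {-1..1} f
            \<and> set_integrable lborel {-1..1} (\<lambda>t. (f t)^2)"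

definition l2norm :: "(real \<Rightarrow> real) \<Rightarrow> real" where
  "l2norm f = sqrt (LBINT t:{-1..1}. (f t)^2)"

definition Aplus :: "(real \<Rightarrow> real) set" where
  "Aplus = {u. L2I u \<and> (\<exists>a::nat \<Rightarrow> real. (\<forall>n. a n \<ge> 0) \<and>
      (\<lambda>N. l2norm (\<lambda>t. u t - (\<Sum>n<N. a n * t ^ n))) \<longlonglongrightarrow> 0)}"

text \<open>u is the metric projection of w onto A_+: a nearest point, unique up to
  equality almost everywhere on [-1,1] (i.e. as an element of L^2).\<close>

definition is_proj_Aplus :: "(real \<Rightarrow> real) \<Rightarrow> (real \<Rightarrow> real) \<Rightarrow> bool" where
  "is_proj_Aplus w u \<longleftrightarrow> u \<in> Aplus
     \<and> (\<forall>v\<in>Aplus. l2norm (\<lambda>t. w t - u t) \<le> l2norm (\<lambda>t. w t - v t))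
     \<and> (\<forall>v\<in>Aplus. l2norm (\<lambda>t. w t - v t) = l2norm (\<lambda>t. w t - u t)
            \<longrightarrow> (AE t in lborel. t \<in> {-1..1} \<longrightarrow> v t = u t))"

definition dist_Aplus :: "(real \<Rightarrow> real) \<Rightarrow> real" where
  "dist_Aplus w = (INF u\<in>Aplus. l2norm (\<lambda>t. w t - u t))"

definition lambda_Aplus :: "(real \<Rightarrow> real) \<Rightarrow> real" where
  "lambda_Aplus w = dist_Aplus w / l2norm w"

definition fpow :: "real \<Rightarrow> real \<Rightarrow> real" where
  "fpow p t = sgn t * \<bar>t\<bar> powr p"

end

theory Submission
  imports Defs
begin


definition ip :: "(real \<Rightarrow> real) \<Rightarrow> (real \<Rightarrow> real) \<Rightarrow> real" where
  "ip f g = (LBINT t:{-1..1}. f t * g t)"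

lemma l2norm_ip: "l2norm f = sqrt (ip f f)"
  unfolding l2norm_def ip_def by (simp add: power2_eq_square)

lemma sbm_mult:
  assumes "set_borel_measurable M A f" "set_borel_measurable M A g"
  shows "set_borel_measurable M A (\<lambda>x. f x * (g x::real))"
proof -
  have "(\<lambda>x. indicator A x *\<^sub>R (f x * g x)) = (\<lambda>x. (indicator A x *\<^sub>R f x) * (indicator A x *\<^sub>R g x))"
    by (auto split: split_indicator)
  then show ?thesis using assms unfolding set_borel_measurable_def by simp
qed

lemma sbm_add:
  assumes "set_borel_measurable M A f" "set_borel_measurable M A g"
  shows "set_borel_measurable M A (\<lambda>x. f x + (g x::real))"
proof -
  have "(\<lambda>x. indicator A x *\<^sub>R (f x + g x)) = (\<lambda>x. (indicator A x *\<^sub>R f x) + (indicator A x *\<^sub>R g x))"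
    by (auto split: split_indicator)
  then show ?thesis using assms unfolding set_borel_measurable_def by simp
qed

lemma sbm_diff:
  assumes "set_borel_measurable M A f" "set_borel_measurable M A g"
  shows "set_borel_measurable M A (\<lambda>x. f x - (g x::real))"
proof -
  have "(\<lambda>x. indicator A x *\<^sub>R (f x - g x)) = (\<lambda>x. (indicator A x *\<^sub>R f x) - (indicator A x *\<^sub>R g x))"
    by (auto split: split_indicator)
  then show ?thesis using assms unfolding set_borel_measurable_def by simp
qed

lemma sbm_scale:
  assumes "set_borel_measurable M A f"
  shows "set_borel_measurable M A (\<lambda>x. c * (f x::real))"
proof -
  have "(\<lambda>x. indicator A x *\<^sub>R (c * f x)) = (\<lambda>x. c * (indicator A x *\<^sub>R f x))"
    by (auto split: split_indicator)
  then show ?thesis using assms unfolding set_borel_measurable_def by simp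
qed

lemma si_bdd:
  fixes f :: "real \<Rightarrow> real"
  assumes "f \<in> borel_measurable borel" "\<And>t. t \<in> {-1..1} \<Longrightarrow> \<bar>f t\<bar> \<le> B"
  shows "set_integrable lborel {-1..1} f"
  unfolding set_integrable_def
  by (rule integrableI_bounded_set_indicator[where B=B]) (use assms in \<open>auto simp: emeasure_lborel_Icc\<close>)

lemma L2I_bdd:
  fixes f :: "real \<Rightarrow> real"
  assumes "f \<in> borel_measurable borel" "\<And>t. t \<in> {-1..1} \<Longrightarrow> \<bar>f t\<bar> \<le> B"
  shows "L2I f"
proof -
  have "set_borel_measurable lborel {-1..1} f"
    unfolding set_borel_measurable_def using assms(1) by simp
  moreover have "set_integrable lborel {-1..1} (\<lambda>t. (f t)^2)"
  proof (rule si_bdd[where B="B^2"])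
    show "(\<lambda>t. (f t)^2) \<in> borel_measurable borel" using assms(1) by simp
    fix t assume "t \<in> {-1..1::real}"
    then have "\<bar>f t\<bar> \<le> B" using assms(2) by blast
    then show "\<bar>(f t)^2\<bar> \<le> B^2"
      by (metis abs_ge_zero abs_power2 power2_abs power_mono)
  qed
  ultimately show ?thesis unfolding L2I_def by blast
qed

lemma L2I_prod:
  assumes "L2I f" "L2I g"
  shows "set_integrable lborel {-1..1} (\<lambda>t. f t * g t)"
proof (rule set_integrable_bound[where f="\<lambda>t. (f t)^2 + (g t)^2"])
  show "set_integrable lborel {-1..1} (\<lambda>t. (f t)^2 + (g t)^2)"
    using assms unfolding L2I_def by (intro set_integral_add(1)) auto
  show "set_borel_measurable lborel {-1..1} (\<lambda>t. f t * g t)"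
    using assms unfolding L2I_def by (intro sbm_mult) auto
  have "norm (f t * g t) \<le> norm ((f t)^2 + (g t)^2)" for t
  proof -
    have "0 \<le> (\<bar>f t\<bar> - \<bar>g t\<bar>)^2" by simp
    then have "2 * \<bar>f t\<bar> * \<bar>g t\<bar> \<le> (f t)^2 + (g t)^2"
      by (simp add: power2_eq_square algebra_simps)
    moreover have "\<bar>f t\<bar> * \<bar>g t\<bar> \<ge> 0" by simp
    moreover have "norm (f t * g t) = \<bar>f t\<bar> * \<bar>g t\<bar>" by (simp add: abs_mult)
    moreover have "norm ((f t)^2 + (g t)^2) = (f t)^2 + (g t)^2" by simp
    ultimately show ?thesis by linarith
  qed
  then show "AE x in lborel. x \<in> {-1..1} \<longrightarrow> norm (f x * g x) \<le> norm ((f x)^2 + (g x)^2)"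
    by simp
qed

lemma L2I_add: assumes "L2I f" "L2I g" shows "L2I (\<lambda>t. f t + g t)"
proof -
  have "set_integrable lborel {-1..1} (\<lambda>t. (f t)^2 + 2 * (f t * g t) + (g t)^2)"
    using assms L2I_prod[OF assms] unfolding L2I_def
    by (intro set_integral_add(1) set_integrable_mult_right) auto
  then show ?thesis using assms unfolding L2I_def
    by (auto intro!: sbm_add simp: power2_eq_square algebra_simps)
qed

lemma L2I_scale: assumes "L2I f" shows "L2I (\<lambda>t. c * f t)"
proof -
  have "set_integrable lborel {-1..1} (\<lambda>t. c^2 * (f t)^2)"
    using assms unfolding L2I_def
    by (intro set_integrable_mult_right) auto
  then show ?thesis using assms unfolding L2I_def
    by (auto intro!: sbm_scale simp: power2_eq_square algebra_simps)
qed

lemma L2I_diff: assumes "L2I f" "L2I g" shows "L2I (\<lambda>t. f t - g t)"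
  using L2I_add[OF assms(1) L2I_scale[OF assms(2), of "-1"]] by simp

lemma ip_add: assumes "L2I f" "L2I g" "L2I h"
  shows "ip (\<lambda>t. f t + g t) h = ip f h + ip g h"
  unfolding ip_def using L2I_prod[OF assms(1,3)] L2I_prod[OF assms(2,3)]
  by (simp add: distrib_right set_integral_add)

lemma ip_scale: "ip (\<lambda>t. c * f t) h = c * ip f h"
  unfolding ip_def by (simp add: mult.assoc)

lemma ip_diff: assumes "L2I f" "L2I g" "L2I h"
  shows "ip (\<lambda>t. f t - g t) h = ip f h - ip g h"
  unfolding ip_def using L2I_prod[OF assms(1,3)] L2I_prod[OF assms(2,3)]
  by (simp add: left_diff_distrib set_integral_diff)

lemma ip_sym: "ip f g = ip g f"
  unfolding ip_def by (simp add: mult.commute)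

lemma ip_nonneg: "ip f f \<ge> 0"
  unfolding ip_def set_lebesgue_integral_def by (intro Bochner_Integration.integral_nonneg) (auto split: split_indicator)

lemma ip_add_r: assumes "L2I f" "L2I g" "L2I h"
  shows "ip h (\<lambda>t. f t + g t) = ip h f + ip h g"
  using ip_add[OF assms] by (simp add: ip_sym)

lemma ip_diff_r: assumes "L2I f" "L2I g" "L2I h"
  shows "ip h (\<lambda>t. f t - g t) = ip h f - ip h g"
  using ip_diff[OF assms] by (simp add: ip_sym)

lemma ip_scale_r: "ip h (\<lambda>t. c * f t) = c * ip h f"
  using ip_scale by (simp add: ip_sym)

lemma L2I_mono: "L2I (\<lambda>t. t ^ n)"
proof (rule L2I_bdd[where B=1])
  fix t :: real assume "t \<in> {-1..1}"
  then have "\<bar>t\<bar> \<le> 1" by auto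
  then show "\<bar>t ^ n\<bar> \<le> 1" by (simp add: power_abs power_le_one)
qed simp

lemma L2I_psum: "L2I (\<lambda>t. \<Sum>n<N. a n * t ^ n)"
proof (induction N)
  case 0
  then show ?case by (rule L2I_bdd[where B=0]) auto
next
  case (Suc N)
  then show ?case using L2I_add[OF Suc L2I_scale[OF L2I_mono, of "a N" N]] by simp
qed

lemma ip_psum:
  assumes "L2I r" "\<And>n. ip r (\<lambda>t. t ^ n) \<le> 0" "\<And>n. a n \<ge> 0"
  shows "ip r (\<lambda>t. \<Sum>n<N. a n * t ^ n) \<le> 0"
proof (induction N)
  case 0
  then show ?case by (simp add: ip_def)
next
  case (Suc N)
  have "ip r (\<lambda>t. \<Sum>n<Suc N. a n * t ^ n) = ip r (\<lambda>t. (\<Sum>n<N. a n * t ^ n) + a N * t ^ N)"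
    by simp
  also have "\<dots> = ip r (\<lambda>t. \<Sum>n<N. a n * t ^ n) + a N * ip r (\<lambda>t. t ^ N)"
    by (subst ip_add_r) (auto intro: L2I_psum L2I_scale L2I_mono assms simp: ip_scale_r)
  also have "\<dots> \<le> 0" using Suc assms(2)[of N] assms(3)[of N]
    by (simp add: add_nonpos_nonpos mult_nonneg_nonpos)
  finally show ?case .
qed

lemma ip_small:
  assumes "L2I r" "L2I h" "e > 0"
  shows "ip r h \<le> e / 2 * ip r r + 1 / (2 * e) * ip h h"
proof -
  have pw: "r t * h t \<le> e / 2 * (r t * r t) + 1 / (2 * e) * (h t * h t)" for t
  proof -
    have "0 \<le> (e * r t - h t)^2 / e" using assms(3) by simp
    also have "(e * r t - h t)^2 / e = e * (r t * r t) - 2 * (r t * h t) + (h t * h t) / e"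
      using assms(3) by (simp add: power2_eq_square field_simps)
    finally show ?thesis using assms(3) by (simp add: field_simps)
  qed
  have i1: "set_integrable lborel {-1..1} (\<lambda>t. r t * r t)" "set_integrable lborel {-1..1} (\<lambda>t. h t * h t)"
    using L2I_prod assms by auto
  have "ip r h \<le> (LBINT t:{-1..1}. e / 2 * (r t * r t) + 1 / (2 * e) * (h t * h t))"
    unfolding ip_def
    by (rule set_integral_mono) (use pw i1 L2I_prod[OF assms(1,2)] in auto)
  also have "\<dots> = e / 2 * ip r r + 1 / (2 * e) * ip h h"
    unfolding ip_def using i1 by (simp add: set_integral_add set_integral_mult_right)
  finally show ?thesis .
qed

lemma ip_Aplus_nonpos:
  assumes "L2I r" "\<And>n. ip r (\<lambda>t. t ^ n) \<le> 0" "v \<in> Aplus"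
  shows "ip r v \<le> 0"
proof -
  obtain a where a: "\<And>n. a n \<ge> 0"
    and lim: "(\<lambda>N. l2norm (\<lambda>t. v t - (\<Sum>n<N. a n * t ^ n))) \<longlonglongrightarrow> 0"
    and Lv: "L2I v"
    using assms(3) unfolding Aplus_def by blast
  define S where "S N = (\<lambda>t. \<Sum>n<N. a n * t ^ n)" for N
  define h where "h N = (\<lambda>t. v t - S N t)" for N
  have LS: "L2I (S N)" for N unfolding S_def by (rule L2I_psum)
  have Lh: "L2I (h N)" for N unfolding h_def by (rule L2I_diff[OF Lv LS])
  have "(\<lambda>N. (sqrt (ip (h N) (h N)))^2) \<longlonglongrightarrow> 0^2"
    using lim unfolding l2norm_ip h_def S_def by (intro tendsto_power) simp
  then have H: "(\<lambda>N. ip (h N) (h N)) \<longlonglongrightarrow> 0" using ip_nonneg by simp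
  have key: "ip r v \<le> e / 2 * ip r r" if e: "e > 0" for e
  proof -
    have "(\<lambda>N. e / 2 * ip r r + 1 / (2 * e) * ip (h N) (h N)) \<longlonglongrightarrow> e / 2 * ip r r + 1 / (2 * e) * 0"
      by (intro tendsto_intros H)
    moreover have "ip r v \<le> e / 2 * ip r r + 1 / (2 * e) * ip (h N) (h N)" for N
    proof -
      have "v = (\<lambda>t. h N t + S N t)" unfolding h_def by auto
      then have "ip r v = ip r (h N) + ip r (S N)"
        using ip_add_r[OF Lh LS assms(1)] by metis
      moreover have "ip r (S N) \<le> 0" unfolding S_def by (rule ip_psum[OF assms(1,2) a])
      ultimately show ?thesis using ip_small[OF assms(1) Lh e, of N] by linarith
    qed
    ultimately show ?thesis by (intro LIMSEQ_le_const[where X="\<lambda>N. e / 2 * ip r r + 1 / (2 * e) * ip (h N) (h N)"]) auto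
  qed
  show ?thesis
  proof (rule ccontr)
    assume "\<not> ?thesis"
    then have pos: "ip r v > 0" by simp
    have R: "ip r r \<ge> 0" by (rule ip_nonneg)
    have "ip r v \<le> (ip r v / (ip r r + 1)) / 2 * ip r r"
      using key[of "ip r v / (ip r r + 1)"] pos R by simp
    also have "\<dots> < ip r v" using pos R by (simp add: field_simps add_pos_nonneg)
    finally show False by simp
  qed
qed

lemma expand:
  assumes Lw: "L2I w" and Lu: "L2I u" and Lv: "L2I v" and ru: "ip (\<lambda>t. w t - u t) u = 0"
  shows "ip (\<lambda>t. w t - v t) (\<lambda>t. w t - v t) =
    ip (\<lambda>t. w t - u t) (\<lambda>t. w t - u t) - 2 * ip (\<lambda>t. w t - u t) v + ip (\<lambda>t. u t - v t) (\<lambda>t. u t - v t)"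
proof -
  define r where "r = (\<lambda>t. w t - u t)"
  define g where "g = (\<lambda>t. u t - v t)"
  have Lr: "L2I r" unfolding r_def using Lw Lu by (rule L2I_diff)
  have Lg: "L2I g" unfolding g_def using Lu Lv by (rule L2I_diff)
  have e: "(\<lambda>t. w t - v t) = (\<lambda>t. r t + g t)" unfolding r_def g_def by auto
  have "ip (\<lambda>t. r t + g t) (\<lambda>t. r t + g t) = ip r (\<lambda>t. r t + g t) + ip g (\<lambda>t. r t + g t)"
    using ip_add[OF Lr Lg L2I_add[OF Lr Lg]] .
  also have "\<dots> = ip r r + ip r g + (ip g r + ip g g)"
    using ip_add_r[OF Lr Lg Lr] ip_add_r[OF Lr Lg Lg] by simp
  finally have "ip (\<lambda>t. r t + g t) (\<lambda>t. r t + g t) = ip r r + ip r g + (ip g r + ip g g)" .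
  moreover have "ip r g = ip r u - ip r v" unfolding g_def using ip_diff_r[OF Lu Lv Lr] .
  ultimately show ?thesis using ru unfolding e r_def[symmetric] g_def[symmetric] by (simp add: ip_sym[of g r])
qed

theorem nearest:
  assumes Lw: "L2I w" and uA: "u \<in> Aplus" and ru: "ip (\<lambda>t. w t - u t) u = 0"
    and rn: "\<And>n. ip (\<lambda>t. w t - u t) (\<lambda>t. t ^ n) \<le> 0"
  shows "is_proj_Aplus w u"
proof -
  have Lu: "L2I u" using uA unfolding Aplus_def by blast
  have Lr: "L2I (\<lambda>t. w t - u t)" using Lw Lu by (rule L2I_diff)
  have ineq: "ip (\<lambda>t. w t - v t) (\<lambda>t. w t - v t) \<ge> ip (\<lambda>t. w t - u t) (\<lambda>t. w t - u t) + ip (\<lambda>t. u t - v t) (\<lambda>t. u t - v t)"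
    if vA: "v \<in> Aplus" for v
  proof -
    have Lv: "L2I v" using vA unfolding Aplus_def by blast
    show ?thesis using expand[OF Lw Lu Lv ru] ip_Aplus_nonpos[OF Lr rn vA] by linarith
  qed
  have part2: "\<forall>v\<in>Aplus. l2norm (\<lambda>t. w t - u t) \<le> l2norm (\<lambda>t. w t - v t)"
  proof
    fix v assume "v \<in> Aplus"
    from ineq[OF this] ip_nonneg[of "\<lambda>t. u t - v t"]
    show "l2norm (\<lambda>t. w t - u t) \<le> l2norm (\<lambda>t. w t - v t)"
      unfolding l2norm_ip by (intro real_sqrt_le_mono) linarith
  qed
  have part3: "AE t in lborel. t \<in> {-1..1} \<longrightarrow> v t = u t"
    if vA: "v \<in> Aplus" and eq: "l2norm (\<lambda>t. w t - v t) = l2norm (\<lambda>t. w t - u t)" for v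
  proof -
    have Lv: "L2I v" using vA unfolding Aplus_def by blast
    have "ip (\<lambda>t. w t - v t) (\<lambda>t. w t - v t) = ip (\<lambda>t. w t - u t) (\<lambda>t. w t - u t)"
      using eq ip_nonneg unfolding l2norm_ip by simp
    then have z: "ip (\<lambda>t. u t - v t) (\<lambda>t. u t - v t) = 0"
      using ineq[OF vA] ip_nonneg[of "\<lambda>t. u t - v t"] by linarith
    have Lg: "L2I (\<lambda>t. u t - v t)" using Lu Lv by (rule L2I_diff)
    have int: "integrable lborel (\<lambda>t. indicator {-1..1} t *\<^sub>R ((u t - v t) * (u t - v t)))"
      using L2I_prod[OF Lg Lg] unfolding set_integrable_def .
    have "AE t in lborel. indicator {-1..1} t *\<^sub>R ((u t - v t) * (u t - v t)) = 0"
      using z unfolding ip_def set_lebesgue_integral_def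
      by (subst (asm) integral_nonneg_eq_0_iff_AE[OF int]) (auto split: split_indicator)
    then show ?thesis by eventually_elim (auto split: split_indicator)
  qed
  show ?thesis unfolding is_proj_Aplus_def using uA part2 part3 by blast
qed



lemma fpow_meas: "fpow p \<in> borel_measurable borel"
  unfolding fpow_def by measurable

lemma fpow_bdd: assumes "p \<ge> 0" "t \<in> {-1..1}" shows "\<bar>fpow p t\<bar> \<le> 1"
proof -
  have "\<bar>t\<bar> powr p \<le> 1" using assms by (intro powr_le1) auto
  then show ?thesis unfolding fpow_def by (auto simp: abs_mult sgn_if)
qed

lemma L2I_fpow: "p \<ge> 0 \<Longrightarrow> L2I (fpow p)"
  by (rule L2I_bdd[where B=1]) (auto intro: fpow_meas fpow_bdd)

lemma ip_mono_mono: "ip (\<lambda>t. t ^ k) (\<lambda>t. t ^ n) = (1 + (-1) ^ (k + n)) / (k + n + 1)"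
proof -
  have "ip (\<lambda>t. t ^ k) (\<lambda>t. t ^ n) = (\<integral>x. x^(k+n) * indicator {-1..1} x \<partial>lborel)"
    unfolding ip_def set_lebesgue_integral_def
    by (intro Bochner_Integration.integral_cong) (auto simp: power_add)
  also have "\<dots> = (1 ^ Suc (k+n) - (-1) ^ Suc (k+n)) / Suc (k+n)"
    by (rule integral_power) simp
  finally show ?thesis by simp
qed

lemma sym_integral:
  fixes f :: "real \<Rightarrow> real"
  assumes "f integrable_on {-1..1}" "((\<lambda>t. f t + f (-t)) has_integral I) {0..1}"
  shows "integral {-1..1} f = I"
proof -
  have i1: "f integrable_on {-1..0}" by (rule integrable_on_subinterval[OF assms(1)]) auto
  have i2: "f integrable_on {0..1}" by (rule integrable_on_subinterval[OF assms(1)]) auto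
  have i3: "(\<lambda>t. f (-t)) integrable_on {0..1}"
    using i1 Henstock_Kurzweil_Integration.integrable_reflect_real[where f=f and a="-1" and b=0] by simp
  have "integral {-1..1} f = integral {-1..0} f + integral {0..1} f"
    using Henstock_Kurzweil_Integration.integral_combine[where a="-1" and c=0 and b=1 and f=f] assms(1) by simp
  also have "integral {-1..0} f = integral {0..1} (\<lambda>t. f (-t))"
    using Henstock_Kurzweil_Integration.integral_reflect_real[where f=f and a="-1" and b=0] by simp
  also have "integral {0..1} (\<lambda>t. f (-t)) + integral {0..1} f = integral {0..1} (\<lambda>t. f t + f (-t))"
    using integral_add[OF i2 i3] by simp
  also have "\<dots> = I" using assms(2) by (rule integral_unique)
  finally show ?thesis .
qed

lemma LBINT_sym:
  fixes f :: "real \<Rightarrow> real"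
  assumes "set_integrable lborel {-1..1} f" "((\<lambda>t. f t + f (-t)) has_integral I) {0..1}"
  shows "(LBINT t:{-1..1}. f t) = I"
  using set_borel_integral_eq_integral[OF assms(1)] sym_integral[OF _ assms(2)] by simp

lemma ip_fpow_mono:
  assumes p: "p > 0"
  shows "ip (fpow p) (\<lambda>t. t ^ n) = (1 - (-1) ^ n) / (p + n + 1)"
proof -
  have si: "set_integrable lborel {-1..1} (\<lambda>t. fpow p t * t ^ n)"
    using L2I_prod[OF L2I_fpow L2I_mono] p by simp
  have "((\<lambda>t. (1 - (-1) ^ n) * t powr (p + n)) has_integral (1 - (-1) ^ n) * (1 powr (p + n + 1) / (p + n + 1))) {0..1}"
    by (rule has_integral_mult_right[OF has_integral_powr_from_0]) (use p in simp_all)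
  then have h0: "((\<lambda>t. (1 - (-1) ^ n) * t powr (p + n)) has_integral (1 - (-1) ^ n) / (p + n + 1)) {0..1}"
    by (simp only: powr_one_eq_one times_divide_eq_right mult_1_right)
  have eq: "(1 - (-1) ^ n) * t powr (p + n) = fpow p t * t ^ n + fpow p (- t) * (- t) ^ n"
    if "t \<in> {0..1}" for t :: real
  proof -
    from that have "t = 0 \<or> t > 0" by auto
    then show ?thesis
    proof
      assume "t = 0" then show ?thesis using p by (simp add: fpow_def)
    next
      assume t: "t > 0"
      have "t powr (p + n) = t powr p * t ^ n" using t by (simp add: powr_add powr_realpow)
      moreover have "(- t) ^ n = (-1) ^ n * t ^ n" by (induct n) auto
      moreover have "fpow p t = t powr p" "fpow p (-t) = - (t powr p)" using t by (simp_all add: fpow_def)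
      ultimately show ?thesis by (simp add: algebra_simps)
    qed
  qed
  have hi: "((\<lambda>t. fpow p t * t ^ n + fpow p (- t) * (- t) ^ n) has_integral (1 - (-1) ^ n) / (p + n + 1)) {0..1}"
    by (rule has_integral_eq[OF eq h0])
  show ?thesis unfolding ip_def by (rule LBINT_sym[OF si hi])
qed

lemma ip_fpow_fpow:
  assumes p: "p > 0"
  shows "ip (fpow p) (fpow p) = 2 / (2 * p + 1)"
proof -
  have si: "set_integrable lborel {-1..1} (\<lambda>t. fpow p t * fpow p t)"
    using L2I_prod[OF L2I_fpow L2I_fpow] p by simp
  have "((\<lambda>t. 2 * t powr (2 * p)) has_integral 2 * (1 powr (2 * p + 1) / (2 * p + 1))) {0..1}"
    by (rule has_integral_mult_right[OF has_integral_powr_from_0]) (use p in simp_all)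
  then have h0: "((\<lambda>t. 2 * t powr (2 * p)) has_integral 2 / (2 * p + 1)) {0..1}"
    by (simp only: powr_one_eq_one times_divide_eq_right mult_1_right)
  have eq: "2 * t powr (2 * p) = fpow p t * fpow p t + fpow p (- t) * fpow p (- t)"
    if "t \<in> {0..1}" for t :: real
  proof -
    from that have "t = 0 \<or> t > 0" by auto
    then show ?thesis
    proof
      assume "t = 0" then show ?thesis using p by (simp add: fpow_def)
    next
      assume t: "t > 0"
      have "t powr (2 * p) = t powr p * t powr p" using t by (simp add: powr_add[symmetric])
      moreover have "fpow p t = t powr p" "fpow p (-t) = - (t powr p)" using t by (simp_all add: fpow_def)
      ultimately show ?thesis by (simp add: algebra_simps)
    qed
  qed
  have hi: "((\<lambda>t. fpow p t * fpow p t + fpow p (- t) * fpow p (- t)) has_integral 2 / (2 * p + 1)) {0..1}"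
    by (rule has_integral_eq[OF eq h0])
  show ?thesis unfolding ip_def by (rule LBINT_sym[OF si hi])
qed


lemma alg_g:
  fixes M a x q1 q2 q3 D1 D2 :: real
  assumes e: "q1 = 2*M+1+a+x+1" "q2 = 2*M+x+2" "q3 = 2*M+x+4" "D1 = 4*M+3+a" "D2 = 4*M+5+a"
   and nz: "q1 \<noteq> 0" "q2 \<noteq> 0" "q3 \<noteq> 0" "D1 \<noteq> 0" "D2 \<noteq> 0"
  shows "(1/q1 - ((4*M+3)*(4*M+5)) / (D1*D2) * ((2-a)/2)/q2 - ((4*M+5)*(4*M+7)) / (D1*D2) * (a/2)/q3)
     = - (a*(2-a)/(D1*D2)) * (x-2*M-1)*(x-2*M-3) / (q1*q2*q3)"
  using nz apply (simp add: field_simps)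
  using e by algebra

lemma alg_E:
  fixes M a D1 D2 Y q1 q2 :: real
  assumes e: "D1 = 4*M+3+a" "D2 = 4*M+5+a" "Y = 2*(2*M+1+a)+1" "q1 = (2*M+1+a)+2*M+2" "q2 = (2*M+1+a)+2*M+4"
   and nz: "D1 \<noteq> 0" "D2 \<noteq> 0" "Y \<noteq> 0" "q1 \<noteq> 0" "q2 \<noteq> 0"
  shows "2/Y - 2*(((4*M+3)*(4*M+5)) / (D1*D2) * ((2-a)/2))/q1 - 2*(((4*M+5)*(4*M+7)) / (D1*D2) * (a/2))/q2
     = 2*a^2*(2-a)^2/(D1^2*D2^2*Y)"
  using nz apply (simp add: field_simps)
  using e by algebra


theorem proposition1p8:
  fixes \<alpha> :: real and m :: nat
  assumes "0 \<le> \<alpha>" and "\<alpha> < 2"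
  defines "c \<equiv> ((4*real m+3)*(4*real m+5)) / ((4*real m+3+\<alpha>)*(4*real m+5+\<alpha>)) * ((2-\<alpha>)/2)"
      and "d \<equiv> ((4*real m+5)*(4*real m+7)) / ((4*real m+3+\<alpha>)*(4*real m+5+\<alpha>)) * (\<alpha>/2)"
  shows "is_proj_Aplus (fpow (2*real m+1+\<alpha>)) (\<lambda>t. c * t^(2*m+1) + d * t^(2*m+3))
    \<and> dist_Aplus (fpow (2*real m+1+\<alpha>)) =
           sqrt 2 * \<alpha> * (2-\<alpha>) / ((4*real m+\<alpha>+3)*(4*real m+\<alpha>+5)* sqrt (4*real m+2*\<alpha>+3))
    \<and> lambda_Aplus (fpow (2*real m+1+\<alpha>)) = \<alpha> * (2-\<alpha>) / ((4*real m+\<alpha>+3)*(4*real m+\<alpha>+5))"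
proof -
  define M where "M = real m"
  define p where "p = 2*real m+1+\<alpha>"
  define w where "w = fpow p"
  define u where "u = (\<lambda>t::real. c * t^(2*m+1) + d * t^(2*m+3))"
  define r where "r = (\<lambda>t. w t - u t)"
  define K where "K = \<alpha>*(2-\<alpha>)/((4*M+3+\<alpha>)*(4*M+5+\<alpha>))"
  define g where "g x = 1/(p+x+1) - c/(2*M+x+2) - d/(2*M+x+4)" for x
  have M0: "M \<ge> 0" unfolding M_def by simp
  have p0: "p > 0" unfolding p_def using assms by simp
  have c0: "c \<ge> 0" unfolding c_def using assms by (auto intro!: mult_nonneg_nonneg divide_nonneg_nonneg)
  have d0: "d \<ge> 0" unfolding d_def using assms by (auto intro!: mult_nonneg_nonneg divide_nonneg_nonneg)
  have K0: "K \<ge> 0" unfolding K_def M_def using assms by (auto intro!: mult_nonneg_nonneg divide_nonneg_nonneg)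
  have Lw: "L2I w" unfolding w_def using p0 by (intro L2I_fpow) simp
  have Lu: "L2I u" unfolding u_def by (intro L2I_add L2I_scale L2I_mono)
  have Lr: "L2I r" unfolding r_def using Lw Lu by (rule L2I_diff)
  define a where "a n = (if n = 2*m+1 then c else if n = 2*m+3 then d else 0)" for n
  have a0: "a n \<ge> 0" for n unfolding a_def using c0 d0 by auto
  have psum: "(\<Sum>n<N. a n * t ^ n) = u t" if "N \<ge> 2*m+4" for N t
  proof -
    have "(\<Sum>n<N. a n * t ^ n) = (\<Sum>n<N. (if n = 2*m+1 then c * t^(2*m+1) else 0) + (if n = 2*m+3 then d * t^(2*m+3) else 0))"
      by (rule sum.cong) (auto simp: a_def)
    also have "\<dots> = u t" using that by (simp add: sum.distrib u_def)
    finally show ?thesis .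
  qed
  have uA: "u \<in> Aplus"
  proof -
    have "(\<lambda>N. l2norm (\<lambda>t. u t - (\<Sum>n<N. a n * t ^ n))) \<longlonglongrightarrow> 0"
    proof (rule tendsto_eventually)
      show "\<forall>\<^sub>F N in sequentially. l2norm (\<lambda>t. u t - (\<Sum>n<N. a n * t ^ n)) = 0"
        unfolding eventually_sequentially
        by (rule exI[of _ "2*m+4"]) (simp add: psum l2norm_def)
    qed
    then show ?thesis unfolding Aplus_def using Lu a0 by blast
  qed
  have ipmn: "ip (\<lambda>t. t ^ k) (\<lambda>t. t ^ n) = (1 + (-1) ^ (k + n)) / (real k + real n + 1)" for k n
    using ip_mono_mono[of k n] by simp
  have ipwn: "ip w (\<lambda>t. t ^ n) = (1 - (-1) ^ n) / (p + real n + 1)" for n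
    unfolding w_def using ip_fpow_mono[OF p0, of n] by simp
  have sgn1: "(-1::real) ^ (2*m+1+n) = - ((-1) ^ n)" "(-1::real) ^ (2*m+3+n) = - ((-1) ^ n)" for n
    by (simp_all add: power_add power_mult)
  have rn_formula: "ip r (\<lambda>t. t ^ n) = (1 - (-1) ^ n) * g (real n)" for n
  proof -
    have "ip r (\<lambda>t. t ^ n) = ip w (\<lambda>t. t ^ n) - ip u (\<lambda>t. t ^ n)"
      unfolding r_def by (rule ip_diff[OF Lw Lu L2I_mono])
    also have "ip u (\<lambda>t. t ^ n) = c * ip (\<lambda>t. t ^ (2*m+1)) (\<lambda>t. t ^ n) + d * ip (\<lambda>t. t ^ (2*m+3)) (\<lambda>t. t ^ n)"
      unfolding u_def
      by (simp only: ip_add[OF L2I_scale[OF L2I_mono] L2I_scale[OF L2I_mono] L2I_mono] ip_scale)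
    finally have "ip r (\<lambda>t. t ^ n) = (1 - (-1) ^ n) / (p + real n + 1)
       - (c * ((1 - (-1) ^ n) / (2*M + real n + 2)) + d * ((1 - (-1) ^ n) / (2*M + real n + 4)))"
      unfolding ipwn ipmn sgn1 M_def by (simp add: algebra_simps)
    then show ?thesis unfolding g_def by (simp add: algebra_simps)
  qed
  have g_formula: "g x = - K * (x-2*M-1)*(x-2*M-3) / ((p+x+1)*(2*M+x+2)*(2*M+x+4))" if x0: "x \<ge> 0" for x
  proof -
    have "g x = (1/(p+x+1) - ((4*M+3)*(4*M+5)) / ((4*M+3+\<alpha>)*(4*M+5+\<alpha>)) * ((2-\<alpha>)/2)/(2*M+x+2) - ((4*M+5)*(4*M+7)) / ((4*M+3+\<alpha>)*(4*M+5+\<alpha>)) * (\<alpha>/2)/(2*M+x+4))"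
      unfolding g_def c_def d_def M_def ..
    also have "\<dots> = - (\<alpha>*(2-\<alpha>)/((4*M+3+\<alpha>)*(4*M+5+\<alpha>))) * (x-2*M-1)*(x-2*M-3) / ((p+x+1)*(2*M+x+2)*(2*M+x+4))"
      by (rule alg_g) (use M0 assms x0 in \<open>simp_all add: p_def M_def\<close>)
    finally show ?thesis unfolding K_def .
  qed
  have g1: "g (2*M+1) = 0" and g3: "g (2*M+3) = 0"
    using g_formula[of "2*M+1"] g_formula[of "2*M+3"] M0 by simp_all
  have rn: "ip r (\<lambda>t. t ^ n) \<le> 0" for n
  proof (cases "even n")
    case True
    then show ?thesis by (simp add: rn_formula)
  next
    case False
    then obtain k where k: "n = 2*k+1" using oddE by blast
    have "(real n - 2*M - 1) * (real n - 2*M - 3) \<ge> 0"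
    proof (cases "k \<le> m")
      case True
      then have "real n - 2*M - 1 \<le> 0" "real n - 2*M - 3 \<le> 0" unfolding k M_def by simp_all
      then show ?thesis by (simp add: mult_nonpos_nonpos)
    next
      case False
      then have "real n - 2*M - 1 \<ge> 0" "real n - 2*M - 3 \<ge> 0" unfolding k M_def by simp_all
      then show ?thesis by simp
    qed
    moreover have "(p+real n+1)*(2*M+real n+2)*(2*M+real n+4) > 0" using p0 M0 by simp
    ultimately have "0 \<le> K * ((real n - 2*M - 1) * (real n - 2*M - 3)) / ((p+real n+1)*(2*M+real n+2)*(2*M+real n+4))"
      using K0 by (intro divide_nonneg_pos mult_nonneg_nonneg[of K])
    then have "g (real n) \<le> 0" using g_formula[of "real n"]
      by (simp add: mult.assoc)
    moreover have "(-1::real) ^ n = -1" using False by simp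
    ultimately show ?thesis by (simp add: rn_formula)
  qed
  have ru: "ip r u = 0"
  proof -
    have "ip r u = c * ip r (\<lambda>t. t ^ (2*m+1)) + d * ip r (\<lambda>t. t ^ (2*m+3))"
      unfolding u_def by (simp only: ip_add_r[OF L2I_scale[OF L2I_mono] L2I_scale[OF L2I_mono] Lr] ip_scale_r)
    also have "\<dots> = 0" unfolding rn_formula using g1 g3 by (simp add: M_def add.commute)
    finally show ?thesis .
  qed
  have proj: "is_proj_Aplus w u"
    by (rule nearest[OF Lw uA]) (use ru rn in \<open>simp_all add: r_def\<close>)
  have ipww: "ip w w = 2 / (2 * p + 1)" unfolding w_def by (rule ip_fpow_fpow[OF p0])
  have ipwm: "ip w (\<lambda>t. t ^ n) = 2 / (p + real n + 1)" if "odd n" for n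
    using ipwn[of n] that by simp
  have "ip r r = ip r w - ip r u" unfolding r_def by (rule ip_diff_r[OF Lw Lu Lr[unfolded r_def]])
  also have "ip r w = ip w r" by (rule ip_sym)
  also have "ip w r = ip w w - ip w u" unfolding r_def by (rule ip_diff_r[OF Lw Lu Lw])
  also have "ip w u = c * ip w (\<lambda>t. t ^ (2*m+1)) + d * ip w (\<lambda>t. t ^ (2*m+3))"
    unfolding u_def by (simp only: ip_add_r[OF L2I_scale[OF L2I_mono] L2I_scale[OF L2I_mono] Lw] ip_scale_r)
  also have "ip w (\<lambda>t. t ^ (2*m+1)) = 2/(p+2*M+2)"
    using ipwm[of "2*m+1"] by (simp add: M_def algebra_simps)
  also have "ip w (\<lambda>t. t ^ (2*m+3)) = 2/(p+2*M+4)"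
    using ipwm[of "2*m+3"] by (simp add: M_def algebra_simps)
  finally have "ip r r = 2/(2*p+1) - 2*c/(p+2*M+2) - 2*d/(p+2*M+4)"
    unfolding ru ipww by (simp add: mult.commute)
  also have "\<dots> = 2*\<alpha>^2*(2-\<alpha>)^2/((4*M+\<alpha>+3)^2*(4*M+\<alpha>+5)^2*(4*M+2*\<alpha>+3))"
  proof -
    have "2/(2*p+1) - 2*c/(p+2*M+2) - 2*d/(p+2*M+4) = 2/(2*(2*M+1+\<alpha>)+1) - 2*(((4*M+3)*(4*M+5)) / ((4*M+3+\<alpha>)*(4*M+5+\<alpha>)) * ((2-\<alpha>)/2))/((2*M+1+\<alpha>)+2*M+2) - 2*(((4*M+5)*(4*M+7)) / ((4*M+3+\<alpha>)*(4*M+5+\<alpha>)) * (\<alpha>/2))/((2*M+1+\<alpha>)+2*M+4)"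
      unfolding p_def c_def d_def M_def ..
    also have "\<dots> = 2*\<alpha>^2*(2-\<alpha>)^2/((4*M+3+\<alpha>)^2*(4*M+5+\<alpha>)^2*(2*(2*M+1+\<alpha>)+1))"
      by (rule alg_E) (use M0 assms in simp_all)
    also have "\<dots> = 2*\<alpha>^2*(2-\<alpha>)^2/((4*M+\<alpha>+3)^2*(4*M+\<alpha>+5)^2*(4*M+2*\<alpha>+3))"
      by (simp add: algebra_simps)
    finally show ?thesis .
  qed
  finally have rr: "ip r r = 2*\<alpha>^2*(2-\<alpha>)^2/((4*M+\<alpha>+3)^2*(4*M+\<alpha>+5)^2*(4*M+2*\<alpha>+3))" .
  define X where "X = \<alpha> * (2-\<alpha>) / ((4*M+\<alpha>+3)*(4*M+\<alpha>+5))"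
  define Y where "Y = 4*M+2*\<alpha>+3"
  have X0: "X \<ge> 0" unfolding X_def using assms M0 by (auto intro!: mult_nonneg_nonneg divide_nonneg_nonneg)
  have Y0: "Y > 0" unfolding Y_def using assms M0 by simp
  have "ip r r = X^2 * (2 / Y)" unfolding rr X_def Y_def by (simp add: power_mult_distrib power_divide)
  then have nr: "l2norm r = X * (sqrt 2 / sqrt Y)"
    unfolding l2norm_ip using X0 by (simp add: real_sqrt_mult real_sqrt_divide)
  have nw: "l2norm w = sqrt 2 / sqrt Y"
    unfolding l2norm_ip ipww Y_def p_def M_def by (simp add: real_sqrt_divide algebra_simps)
  have dist: "dist_Aplus w = l2norm r"
    unfolding dist_Aplus_def r_def
  proof (rule cInf_eq_minimum)
    show "l2norm (\<lambda>t. w t - u t) \<in> (\<lambda>v. l2norm (\<lambda>t. w t - v t)) ` Aplus" using uA by blast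
    fix x assume "x \<in> (\<lambda>v. l2norm (\<lambda>t. w t - v t)) ` Aplus"
    then show "l2norm (\<lambda>t. w t - u t) \<le> x" using proj unfolding is_proj_Aplus_def by blast
  qed
  have lam: "lambda_Aplus w = X"
    unfolding lambda_Aplus_def dist nr nw using Y0 by simp
  have dist': "dist_Aplus w = sqrt 2 * \<alpha> * (2-\<alpha>) / ((4*real m+\<alpha>+3)*(4*real m+\<alpha>+5)* sqrt (4*real m+2*\<alpha>+3))"
    unfolding dist nr X_def Y_def M_def by simp
  show ?thesis using proj dist' lam unfolding w_def u_def p_def X_def M_def by simp
qed

end
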